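(* Let $n\ge0$. For every Motzkin path $\gamma$ of length $n$, in the poset $\mathcal{M}_n$ we have $|\Delta\gamma|=\omega_{HU}(\gamma)+\omega_{DH}(\gamma)+\omega_{DU}(\gamma)+\omega_{HH}(\gamma)$ and $|\nabla\gamma|=\omega_{UH}(\gamma)+\omega_{HD}(\gamma)+\omega_{UD}(\gamma)+\omega^*_{HH}(\gamma)$. For every Grand Motzkin path $\gamma$ of length $n$, in the poset $\mathcal{GM}_n$ we have $|\Delta\gamma|=\omega_{HU}(\gamma)+\omega_{DH}(\gamma)+\omega_{DU}(\gamma)+\omega_{HH}(\gamma)$ and $|\nabla\gamma|=\omega_{UH}(\gamma)+\omega_{HD}(\gamma)+\omega_{UD}(\gamma)+\omega_{HH}(\gamma)$.
   Context: Steps: $U=(1,1)$, $D=(1,-1)$, $H=(1,0)$. A Grand Motzkin path of length $n$ is a lattice path from $(0,0)$ to $(n,0)$ with steps $U,D,H$; a Motzkin path is a Grand Motzkin path never going below the $x$-axis. $\mathcal{M}_n$ (resp. $\mathcal{GM}_n$) is the set of Motzkin (resp. Grand Motzkin) paths of length $n$, partially ordered by $\gamma_1\le\gamma_2$ iff $\gamma_1$ lies weakly below $\gamma_2$. $\Delta x$ is the set of elements covering $x$, $\nabla x$ the set of elements covered by $x$. Paths are identified with words of steps; $\omega_\alpha(\gamma)$ is the number of occurrences of the word $\alpha$ as a factor (contiguous subword, overlapping occurrences counted separately) of $\gamma$; $\omega^*_{HH}(\gamma)$ is the number of occurrences of the factor $HH$ not lying on the $x$-axis. *)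

theory Defs
  imports Main
begin

datatype step = U | D | H

type_synonym path = "step list"

definition stepval :: "step \<Rightarrow> int" where
  "stepval s = (case s of U \<Rightarrow> 1 | D \<Rightarrow> -1 | H \<Rightarrow> 0)"

definition height :: "path \<Rightarrow> nat \<Rightarrow> int" where
  "height p i = sum_list (map stepval (take i p))"

definition grand_motzkin :: "nat \<Rightarrow> path set" where
  "grand_motzkin n = {p. length p = n \<and> height p n = 0}"

definition motzkin :: "nat \<Rightarrow> path set" where
  "motzkin n = {p \<in> grand_motzkin n. \<forall>i\<le>n. height p i \<ge> 0}"

definition below :: "path \<Rightarrow> path \<Rightarrow> bool" where
  "below p q \<longleftrightarrow> length p = length q \<and> (\<forall>i\<le>length p. height p i \<le> height q i)"

definition covers_in :: "path set \<Rightarrow> path \<Rightarrow> path \<Rightarrow> bool" where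
  "covers_in S x y \<longleftrightarrow> x \<in> S \<and> y \<in> S \<and> below x y \<and> x \<noteq> y \<and>
     \<not> (\<exists>z\<in>S. below x z \<and> below z y \<and> z \<noteq> x \<and> z \<noteq> y)"

definition up_covers :: "path set \<Rightarrow> path \<Rightarrow> path set" where
  "up_covers S x = {y. covers_in S x y}"

definition down_covers :: "path set \<Rightarrow> path \<Rightarrow> path set" where
  "down_covers S x = {y. covers_in S y x}"

definition occ :: "step list \<Rightarrow> path \<Rightarrow> nat" where
  "occ a p = card {i. i + length a \<le> length p \<and> take (length a) (drop i p) = a}"

definition occ_HH_star :: "path \<Rightarrow> nat" where
  "occ_HH_star p = card {i. i + 2 \<le> length p \<and> take 2 (drop i p) = [H, H] \<and> height p i \<noteq> 0}"

end

theory Submission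
  imports Defs
begin

definition SS :: "bool \<Rightarrow> nat \<Rightarrow> path set" where
  "SS b n = {p. length p = n \<and> height p n = 0 \<and> (b \<longrightarrow> (\<forall>i\<le>n. 0 \<le> height p i))}"

lemma motzkin_SS: "motzkin n = SS True n"
  by (auto simp: motzkin_def grand_motzkin_def SS_def)
lemma grand_SS: "grand_motzkin n = SS False n"
  by (auto simp: grand_motzkin_def SS_def)

lemma height_0[simp]: "height p 0 = 0" by (simp add: height_def)
lemma height_Suc: "i < length p \<Longrightarrow> height p (Suc i) = height p i + stepval (p!i)"
  by (simp add: height_def take_Suc_conv_app_nth)
lemma stepval_simps[simp]: "stepval U = 1" "stepval D = -1" "stepval H = 0"
  by (simp_all add: stepval_def)
lemma lip: "j < length p \<Longrightarrow> height p (Suc j) - height p j \<in> {-1,0,1}"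
  by (cases "p!j") (simp_all add: height_Suc)
lemma height_pred: "0 < i \<Longrightarrow> i \<le> length p \<Longrightarrow> height p i = height p (i-1) + stepval (p!(i-1))"
  using height_Suc[of "i-1" p] by simp

lemma path_eq:
  assumes "length p = n" "length q = n" "\<forall>i\<le>n. height p i = height q i"
  shows "p = q"
proof (rule nth_equalityI)
  show "length p = length q" using assms by simp
  fix i assume i: "i < length p"
  have "height p (Suc i) = height q (Suc i)" "height p i = height q i" using assms i by auto
  moreover have "height p (Suc i) = height p i + stepval (p!i)" using i by (simp add: height_Suc)
  moreover have "height q (Suc i) = height q i + stepval (q!i)" using i assms by (simp add: height_Suc)
  ultimately have "stepval (p!i) = stepval (q!i)" by simp
  thus "p!i = q!i" by (cases "p!i"; cases "q!i") simp_all
qed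

definition stepof :: "int \<Rightarrow> step" where
  "stepof d = (if d = 1 then U else if d = -1 then D else H)"
definition path_of :: "(nat \<Rightarrow> int) \<Rightarrow> nat \<Rightarrow> path" where
  "path_of f n = map (\<lambda>j. stepof (f (Suc j) - f j)) [0..<n]"

lemma length_path_of[simp]: "length (path_of f n) = n" by (simp add: path_of_def)

lemma height_path_of:
  assumes "f 0 = 0" "\<forall>j<n. f (Suc j) - f j \<in> {-1,0,1}"
  shows "i \<le> n \<Longrightarrow> height (path_of f n) i = f i"
proof (induction i)
  case 0 thus ?case using assms by simp
next
  case (Suc i)
  hence i: "i < n" by simp
  hence "height (path_of f n) (Suc i) = height (path_of f n) i + stepval (stepof (f (Suc i) - f i))"
    by (simp add: height_Suc path_of_def)
  moreover have "stepval (stepof (f (Suc i) - f i)) = f (Suc i) - f i"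
    using assms(2) i by (auto simp: stepof_def)
  ultimately show ?case using Suc i by simp
qed

definition bump :: "(nat \<Rightarrow> int) \<Rightarrow> nat \<Rightarrow> nat \<Rightarrow> int" where
  "bump f i = (\<lambda>j. f j + (if j = i then 1 else 0))"
definition unbump :: "(nat \<Rightarrow> int) \<Rightarrow> nat \<Rightarrow> nat \<Rightarrow> int" where
  "unbump f i = (\<lambda>j. f j - (if j = i then 1 else 0))"

lemma up_exists:
  assumes x: "x \<in> SS b n" and y: "y \<in> SS b n" and le: "\<forall>j\<le>n. height x j \<le> height y j"
    and ne: "x \<noteq> y"
  shows "\<exists>i. 0<i \<and> i<n \<and> height x i < height y i \<and> height x i \<le> height x (i-1)
             \<and> height x i \<le> height x (Suc i)"
proof -
  have lx: "length x = n" and ly: "length y = n" and x0: "height x n = 0" and y0: "height y n = 0"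
    using x y by (auto simp: SS_def)
  let ?D = "{j. j \<le> n \<and> height x j < height y j}"
  have De: "?D \<noteq> {}"
  proof
    assume "?D = {}"
    hence "\<forall>j\<le>n. height x j = height y j" using le by force
    hence "x = y" using path_eq lx ly by blast
    with ne show False by simp
  qed
  have fin: "finite ?D" by (rule finite_subset[of _ "{..n}"]) auto
  define m where "m = Min (height x ` ?D)"
  have "m \<in> height x ` ?D" unfolding m_def using fin De by (intro Min_in) auto
  then obtain i where iD: "i \<in> ?D" and mi: "height x i = m" by auto
  have minD: "height x i \<le> height x j" if "j \<in> ?D" for j
  proof -
    have "height x j \<in> height x ` ?D" using that by blast
    hence "Min (height x ` ?D) \<le> height x j" using fin by (intro Min_le) auto
    thus ?thesis using mi m_def by simp
  qed
  have "i \<noteq> 0"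
  proof
    assume "i = 0" thus False using iD by simp
  qed
  moreover have "i \<noteq> n" using iD x0 y0 by auto
  ultimately have i0: "0 < i" and iN: "i < n" using iD by auto
  have L: "height x i \<le> height x (i-1)"
  proof (cases "i-1 \<in> ?D")
    case True thus ?thesis using minD by blast
  next
    case False
    hence e: "height x (i-1) = height y (i-1)" using le[rule_format, of "i-1"] iN by force
    have "height y (Suc (i-1)) - height y (i-1) \<in> {-1,0,1}" using lip[of "i-1" y] ly iN by simp
    hence "height y i - height y (i-1) \<le> 1" using i0 by auto
    thus ?thesis using e iD by auto
  qed
  have R: "height x i \<le> height x (Suc i)"
  proof (cases "Suc i \<in> ?D")
    case True thus ?thesis using minD by blast
  next
    case False
    hence e: "height x (Suc i) = height y (Suc i)" using le[rule_format, of "Suc i"] iN by force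
    have "height y (Suc i) - height y i \<in> {-1,0,1}" using lip[of i y] ly iN by simp
    hence "height y i - height y (Suc i) \<le> 1" by auto
    thus ?thesis using e iD by auto
  qed
  show ?thesis using i0 iN iD L R by auto
qed

lemma bump_in:
  assumes x: "x \<in> SS b n" and i: "0<i" "i<n"
    and L: "height x i \<le> height x (i-1)" and R: "height x i \<le> height x (Suc i)"
  shows "path_of (bump (height x) i) n \<in> SS b n \<and>
         (\<forall>j\<le>n. height (path_of (bump (height x) i) n) j = bump (height x) i j)"
proof -
  have lx: "length x = n" and x0: "height x n = 0" and nn: "b \<longrightarrow> (\<forall>j\<le>n. 0 \<le> height x j)"
    using x by (auto simp: SS_def)
  have lipb: "\<forall>j<n. bump (height x) i (Suc j) - bump (height x) i j \<in> {-1,0,1}"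
  proof (intro allI impI)
    fix j assume j: "j < n"
    have l1: "height x (Suc j) - height x j \<in> {-1,0,1}" using lip j lx by auto
    show "bump (height x) i (Suc j) - bump (height x) i j \<in> {-1,0,1}"
    proof (cases "Suc j = i")
      case True
      hence "j = i - 1" by simp
      thus ?thesis using l1 L True by (auto simp: bump_def)
    next
      case False
      thus ?thesis using l1 R by (cases "j = i") (auto simp: bump_def)
    qed
  qed
  have b0: "bump (height x) i 0 = 0" using i by (simp add: bump_def)
  have h: "\<forall>j\<le>n. height (path_of (bump (height x) i) n) j = bump (height x) i j"
    using height_path_of[OF b0 lipb] by blast
  have "path_of (bump (height x) i) n \<in> SS b n"
    unfolding SS_def using h x0 nn i by (auto simp: bump_def)
  with h show ?thesis by blast
qed

lemma bump_rev:
  assumes y: "y \<in> SS b n" and i: "0<i" "i<n"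
    and h: "\<forall>j\<le>n. height y j = bump (height x) i j"
  shows "height x i \<le> height x (i-1) \<and> height x i \<le> height x (Suc i)"
proof -
  have ly: "length y = n" using y by (simp add: SS_def)
  have a: "height y (Suc (i-1)) - height y (i-1) \<in> {-1,0,1}" using lip[of "i-1" y] ly i by simp
  have b: "height y (Suc i) - height y i \<in> {-1,0,1}" using lip[of i y] ly i by simp
  have "height y i = height x i + 1" "height y (i-1) = height x (i-1)" "height y (Suc i) = height x (Suc i)"
    using h i by (auto simp: bump_def)
  thus ?thesis using a b i by auto
qed

lemma cover_iff:
  "covers_in (SS b n) x y \<longleftrightarrow> x \<in> SS b n \<and> y \<in> SS b n \<and>
     (\<exists>i. 0<i \<and> i<n \<and> (\<forall>j\<le>n. height y j = bump (height x) i j))"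
proof
  assume c: "covers_in (SS b n) x y"
  hence x: "x \<in> SS b n" and y: "y \<in> SS b n" and bl: "below x y" and ne: "x \<noteq> y"
    and nz: "\<not> (\<exists>z\<in>SS b n. below x z \<and> below z y \<and> z \<noteq> x \<and> z \<noteq> y)"
    by (auto simp: covers_in_def)
  have lx: "length x = n" and ly: "length y = n" using x y by (auto simp: SS_def)
  have le: "\<forall>j\<le>n. height x j \<le> height y j" using bl lx by (simp add: below_def)
  obtain i where i: "0<i" "i<n" and lt: "height x i < height y i"
    and L: "height x i \<le> height x (i-1)" and R: "height x i \<le> height x (Suc i)"
    using up_exists[OF x y le ne] by blast
  define z where "z = path_of (bump (height x) i) n"
  have zS: "z \<in> SS b n" and hz: "\<forall>j\<le>n. height z j = bump (height x) i j"
    using bump_in[OF x i L R] unfolding z_def by auto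
  have "below x z" using hz lx by (auto simp: below_def bump_def z_def)
  moreover have "below z y" using hz le lt ly by (auto simp: below_def bump_def z_def)
  moreover have "z \<noteq> x"
  proof
    assume "z = x"
    hence "height z i = height x i" by simp
    thus False using hz i by (auto simp: bump_def)
  qed
  ultimately have "z = y" using nz zS by blast
  thus "x \<in> SS b n \<and> y \<in> SS b n \<and> (\<exists>i. 0<i \<and> i<n \<and> (\<forall>j\<le>n. height y j = bump (height x) i j))"
    using x y i hz by blast
next
  assume "x \<in> SS b n \<and> y \<in> SS b n \<and> (\<exists>i. 0<i \<and> i<n \<and> (\<forall>j\<le>n. height y j = bump (height x) i j))"
  then obtain i where x: "x \<in> SS b n" and y: "y \<in> SS b n" and i: "0<i" "i<n"
    and h: "\<forall>j\<le>n. height y j = bump (height x) i j" by blast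
  have lx: "length x = n" and ly: "length y = n" using x y by (auto simp: SS_def)
  have "below x y" using h lx ly by (auto simp: below_def bump_def)
  moreover have "x \<noteq> y"
  proof
    have "height y i \<noteq> height x i" using h i by (simp add: bump_def)
    moreover assume "x = y"
    ultimately show False by simp
  qed
  moreover have "\<not> (\<exists>z\<in>SS b n. below x z \<and> below z y \<and> z \<noteq> x \<and> z \<noteq> y)"
  proof
    assume "\<exists>z\<in>SS b n. below x z \<and> below z y \<and> z \<noteq> x \<and> z \<noteq> y"
    then obtain z where z: "z \<in> SS b n" and a1: "below x z" and a2: "below z y"
      and n1: "z \<noteq> x" and n2: "z \<noteq> y" by blast
    have lz: "length z = n" using z by (simp add: SS_def)
    have b1: "\<forall>j\<le>n. height x j \<le> height z j" using a1 lx by (simp add: below_def)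
    have b2: "\<forall>j\<le>n. height z j \<le> height y j" using a2 lz by (simp add: below_def)
    show False
    proof (cases "height z i = height x i")
      case True
      have "\<forall>j\<le>n. height z j = height x j"
      proof (intro allI impI)
        fix j assume "j \<le> n"
        thus "height z j = height x j" using True b1 b2 h by (cases "j = i") (auto simp: bump_def, force)
      qed
      hence "z = x" using path_eq lz lx by metis
      with n1 show False by simp
    next
      case False
      have "\<forall>j\<le>n. height z j = height y j"
      proof (intro allI impI)
        fix j assume j: "j \<le> n"
        show "height z j = height y j"
        proof (cases "j = i")
          case True
          have "height y i = height x i + 1" using h i by (simp add: bump_def)
          moreover have "height x i \<le> height z i" "height z i \<le> height y i" using b1 b2 i by auto
          ultimately show ?thesis using False True by simp
        next
          case f: False
          have "height y j = height x j" using h j f by (simp add: bump_def)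
          moreover have "height x j \<le> height z j" "height z j \<le> height y j" using b1 b2 j by auto
          ultimately show ?thesis by simp
        qed
      qed
      hence "z = y" using path_eq lz ly by metis
      with n2 show False by simp
    qed
  qed
  ultimately show "covers_in (SS b n) x y" using x y by (simp add: covers_in_def)
qed


definition Iu :: "path \<Rightarrow> nat \<Rightarrow> nat set" where
  "Iu x n = {i. 0<i \<and> i<n \<and> height x i \<le> height x (i-1) \<and> height x i \<le> height x (Suc i)}"

lemma up_covers_eq:
  assumes x: "x \<in> SS b n"
  shows "up_covers (SS b n) x = (\<lambda>i. path_of (bump (height x) i) n) ` Iu x n"
proof
  show "up_covers (SS b n) x \<subseteq> (\<lambda>i. path_of (bump (height x) i) n) ` Iu x n"
  proof
    fix y assume "y \<in> up_covers (SS b n) x"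
    then obtain i where y: "y \<in> SS b n" and i: "0<i" "i<n"
      and h: "\<forall>j\<le>n. height y j = bump (height x) i j"
      by (auto simp: up_covers_def cover_iff)
    have c: "height x i \<le> height x (i-1) \<and> height x i \<le> height x (Suc i)"
      using bump_rev[OF y i h] .
    have hz: "\<forall>j\<le>n. height (path_of (bump (height x) i) n) j = bump (height x) i j"
      using bump_in[OF x i] c by blast
    have "y = path_of (bump (height x) i) n"
      using path_eq[of y n "path_of (bump (height x) i) n"] y h hz by (simp add: SS_def)
    moreover have "i \<in> Iu x n" using i c by (simp add: Iu_def)
    ultimately show "y \<in> (\<lambda>i. path_of (bump (height x) i) n) ` Iu x n" by blast
  qed
next
  show "(\<lambda>i. path_of (bump (height x) i) n) ` Iu x n \<subseteq> up_covers (SS b n) x"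
  proof
    fix y assume "y \<in> (\<lambda>i. path_of (bump (height x) i) n) ` Iu x n"
    then obtain i where iI: "i \<in> Iu x n" and yd: "y = path_of (bump (height x) i) n" by blast
    have i: "0<i" "i<n" and c: "height x i \<le> height x (i-1)" "height x i \<le> height x (Suc i)"
      using iI by (auto simp: Iu_def)
    show "y \<in> up_covers (SS b n) x"
      using bump_in[OF x i c] x i yd by (auto simp: up_covers_def cover_iff)
  qed
qed

lemma card_up: assumes x: "x \<in> SS b n" shows "card (up_covers (SS b n) x) = card (Iu x n)"
proof -
  have "inj_on (\<lambda>i. path_of (bump (height x) i) n) (Iu x n)"
  proof (rule inj_onI)
    fix i k assume iI: "i \<in> Iu x n" and kI: "k \<in> Iu x n"
      and e: "path_of (bump (height x) i) n = path_of (bump (height x) k) n"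
    have i: "0<i" "i<n" and c: "height x i \<le> height x (i-1)" "height x i \<le> height x (Suc i)"
      using iI by (auto simp: Iu_def)
    have k: "0<k" "k<n" and ck: "height x k \<le> height x (k-1)" "height x k \<le> height x (Suc k)"
      using kI by (auto simp: Iu_def)
    have e1: "height (path_of (bump (height x) i) n) i = bump (height x) i i"
      using bump_in[OF x i c] i by auto
    have e2: "height (path_of (bump (height x) k) n) i = bump (height x) k i"
      using bump_in[OF x k ck] i by auto
    have "bump (height x) i i = bump (height x) k i"
      using e1 e2 e by simp
    thus "i = k" by (auto simp: bump_def split: if_splits)
  qed
  thus ?thesis using up_covers_eq[OF x] by (simp add: card_image)
qed

definition Id :: "bool \<Rightarrow> path \<Rightarrow> nat \<Rightarrow> nat set" where
  "Id b x n = {i. 0<i \<and> i<n \<and> height x (i-1) \<le> height x i \<and> height x (Suc i) \<le> height x i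
      \<and> (b \<longrightarrow> 1 \<le> height x i)}"

lemma unbump_in:
  assumes x: "x \<in> SS b n" and i: "0<i" "i<n"
    and L: "height x (i-1) \<le> height x i" and R: "height x (Suc i) \<le> height x i"
    and P: "b \<longrightarrow> 1 \<le> height x i"
  shows "path_of (unbump (height x) i) n \<in> SS b n \<and>
         (\<forall>j\<le>n. height (path_of (unbump (height x) i) n) j = unbump (height x) i j)"
proof -
  have lx: "length x = n" and x0: "height x n = 0" and nn: "b \<longrightarrow> (\<forall>j\<le>n. 0 \<le> height x j)"
    using x by (auto simp: SS_def)
  have lipb: "\<forall>j<n. unbump (height x) i (Suc j) - unbump (height x) i j \<in> {-1,0,1}"
  proof (intro allI impI)
    fix j assume j: "j < n"
    have l1: "height x (Suc j) - height x j \<in> {-1,0,1}" using lip j lx by auto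
    show "unbump (height x) i (Suc j) - unbump (height x) i j \<in> {-1,0,1}"
    proof (cases "Suc j = i")
      case True
      hence "j = i - 1" by simp
      thus ?thesis using l1 L True by (auto simp: unbump_def)
    next
      case False
      thus ?thesis using l1 R by (cases "j = i") (auto simp: unbump_def)
    qed
  qed
  have b0: "unbump (height x) i 0 = 0" using i by (simp add: unbump_def)
  have h: "\<forall>j\<le>n. height (path_of (unbump (height x) i) n) j = unbump (height x) i j"
    using height_path_of[OF b0 lipb] by blast
  have "path_of (unbump (height x) i) n \<in> SS b n"
    unfolding SS_def using h x0 nn i P by (auto simp: unbump_def)
  with h show ?thesis by blast
qed

lemma unbump_rev:
  assumes y: "y \<in> SS b n" and i: "0<i" "i<n"
    and h: "\<forall>j\<le>n. height x j = bump (height y) i j"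
  shows "height x (i-1) \<le> height x i \<and> height x (Suc i) \<le> height x i \<and> (b \<longrightarrow> 1 \<le> height x i)"
    and "\<forall>j\<le>n. height y j = unbump (height x) i j"
proof -
  have ly: "length y = n" and nn: "b \<longrightarrow> (\<forall>j\<le>n. 0 \<le> height y j)" using y by (auto simp: SS_def)
  have a: "height y (Suc (i-1)) - height y (i-1) \<in> {-1,0,1}" using lip[of "i-1" y] ly i by simp
  have b: "height y (Suc i) - height y i \<in> {-1,0,1}" using lip[of i y] ly i by simp
  have "height x i = height y i + 1" "height x (i-1) = height y (i-1)" "height x (Suc i) = height y (Suc i)"
    using h i by (auto simp: bump_def)
  moreover have "b \<longrightarrow> 0 \<le> height y i" using nn i by auto
  ultimately show "height x (i-1) \<le> height x i \<and> height x (Suc i) \<le> height x i \<and> (b \<longrightarrow> 1 \<le> height x i)"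
    using a b i by auto
  show "\<forall>j\<le>n. height y j = unbump (height x) i j" using h by (auto simp: bump_def unbump_def)
qed

lemma down_covers_eq:
  assumes x: "x \<in> SS b n"
  shows "down_covers (SS b n) x = (\<lambda>i. path_of (unbump (height x) i) n) ` Id b x n"
proof
  show "down_covers (SS b n) x \<subseteq> (\<lambda>i. path_of (unbump (height x) i) n) ` Id b x n"
  proof
    fix y assume "y \<in> down_covers (SS b n) x"
    then obtain i where y: "y \<in> SS b n" and i: "0<i" "i<n"
      and h: "\<forall>j\<le>n. height x j = bump (height y) i j"
      by (auto simp: down_covers_def cover_iff)
    have c: "height x (i-1) \<le> height x i" "height x (Suc i) \<le> height x i" "b \<longrightarrow> 1 \<le> height x i"
      using unbump_rev(1)[OF y i h] by auto
    have hy: "\<forall>j\<le>n. height y j = unbump (height x) i j" using unbump_rev(2)[OF y i h] .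
    have hz: "\<forall>j\<le>n. height (path_of (unbump (height x) i) n) j = unbump (height x) i j"
      using unbump_in[OF x i c] by blast
    have "y = path_of (unbump (height x) i) n"
      using path_eq[of y n "path_of (unbump (height x) i) n"] y hy hz by (simp add: SS_def)
    moreover have "i \<in> Id b x n" using i c by (simp add: Id_def)
    ultimately show "y \<in> (\<lambda>i. path_of (unbump (height x) i) n) ` Id b x n" by blast
  qed
next
  show "(\<lambda>i. path_of (unbump (height x) i) n) ` Id b x n \<subseteq> down_covers (SS b n) x"
  proof
    fix y assume "y \<in> (\<lambda>i. path_of (unbump (height x) i) n) ` Id b x n"
    then obtain i where iI: "i \<in> Id b x n" and yd: "y = path_of (unbump (height x) i) n" by blast
    have i: "0<i" "i<n" and c: "height x (i-1) \<le> height x i" "height x (Suc i) \<le> height x i"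
      "b \<longrightarrow> 1 \<le> height x i"
      using iI by (auto simp: Id_def)
    have yS: "y \<in> SS b n" and hy: "\<forall>j\<le>n. height y j = unbump (height x) i j"
      using unbump_in[OF x i c] yd by auto
    have "\<forall>j\<le>n. height x j = bump (height y) i j" using hy by (auto simp: bump_def unbump_def)
    thus "y \<in> down_covers (SS b n) x"
      using yS x i by (auto simp: down_covers_def cover_iff)
  qed
qed

lemma card_down: assumes x: "x \<in> SS b n" shows "card (down_covers (SS b n) x) = card (Id b x n)"
proof -
  have "inj_on (\<lambda>i. path_of (unbump (height x) i) n) (Id b x n)"
  proof (rule inj_onI)
    fix i k assume iI: "i \<in> Id b x n" and kI: "k \<in> Id b x n"
      and e: "path_of (unbump (height x) i) n = path_of (unbump (height x) k) n"
    have i: "0<i" "i<n" and c: "height x (i-1) \<le> height x i" "height x (Suc i) \<le> height x i"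
      "b \<longrightarrow> 1 \<le> height x i"
      using iI by (auto simp: Id_def)
    have k: "0<k" "k<n" and ck: "height x (k-1) \<le> height x k" "height x (Suc k) \<le> height x k"
      "b \<longrightarrow> 1 \<le> height x k"
      using kI by (auto simp: Id_def)
    have e1: "height (path_of (unbump (height x) i) n) i = unbump (height x) i i"
      using unbump_in[OF x i c] i by auto
    have e2: "height (path_of (unbump (height x) k) n) i = unbump (height x) k i"
      using unbump_in[OF x k ck] i by auto
    have "unbump (height x) i i = unbump (height x) k i"
      using e1 e2 e by simp
    thus "i = k" by (auto simp: unbump_def split: if_splits)
  qed
  thus ?thesis using down_covers_eq[OF x] by (simp add: card_image)
qed


lemma take2: "Suc j < length x \<Longrightarrow> take 2 (drop j x) = [x!j, x!Suc j]"
proof -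
  assume a: "Suc j < length x"
  have "drop j x = x!j # drop (Suc j) x" using a by (simp add: Cons_nth_drop_Suc)
  also have "drop (Suc j) x = x!Suc j # drop (Suc (Suc j)) x" using a by (simp add: Cons_nth_drop_Suc)
  finally show ?thesis by (simp add: numeral_2_eq_2)
qed

definition Aset :: "path \<Rightarrow> nat \<Rightarrow> step \<Rightarrow> step \<Rightarrow> nat set" where
  "Aset x n a b = {i. 0<i \<and> i<n \<and> x!(i-1) = a \<and> x!i = b}"

lemma Aset_Suc: "Aset x n a b = Suc ` {j. Suc j < n \<and> x!j = a \<and> x!Suc j = b}"
proof
  show "Aset x n a b \<subseteq> Suc ` {j. Suc j < n \<and> x!j = a \<and> x!Suc j = b}"
  proof
    fix i assume "i \<in> Aset x n a b"
    hence "i = Suc (i-1)" "i - 1 \<in> {j. Suc j < n \<and> x!j = a \<and> x!Suc j = b}" by (auto simp: Aset_def)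
    thus "i \<in> Suc ` {j. Suc j < n \<and> x!j = a \<and> x!Suc j = b}" by (rule image_eqI)
  qed
qed (auto simp: Aset_def)

lemma occ_eq: assumes "length x = n" shows "occ [a,b] x = card (Aset x n a b)"
proof -
  have "{i. i + length [a,b] \<le> length x \<and> take (length [a,b]) (drop i x) = [a,b]}
        = {j. Suc j < n \<and> x!j = a \<and> x!Suc j = b}"
  proof (intro Collect_cong iffI)
    fix i assume h: "i + length [a,b] \<le> length x \<and> take (length [a,b]) (drop i x) = [a,b]"
    hence "Suc i < length x" by simp
    thus "Suc i < n \<and> x!i = a \<and> x!Suc i = b" using h take2[of i x] assms by (simp add: numeral_2_eq_2)
  next
    fix i assume h: "Suc i < n \<and> x!i = a \<and> x!Suc i = b"
    thus "i + length [a,b] \<le> length x \<and> take (length [a,b]) (drop i x) = [a,b]"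
      using take2[of i x] assms by (simp add: numeral_2_eq_2)
  qed
  thus ?thesis unfolding occ_def Aset_Suc by (simp add: card_image)
qed

lemma occ_star_eq: assumes "length x = n"
  shows "occ_HH_star x = card {i. 0<i \<and> i<n \<and> x!(i-1) = H \<and> x!i = H \<and> height x (i-1) \<noteq> 0}"
proof -
  have "{i. i + 2 \<le> length x \<and> take 2 (drop i x) = [H,H] \<and> height x i \<noteq> 0}
        = {j. Suc j < n \<and> x!j = H \<and> x!Suc j = H \<and> height x j \<noteq> 0}"
  proof (intro Collect_cong iffI)
    fix i assume h: "i + 2 \<le> length x \<and> take 2 (drop i x) = [H,H] \<and> height x i \<noteq> 0"
    hence "Suc i < length x" by simp
    thus "Suc i < n \<and> x!i = H \<and> x!Suc i = H \<and> height x i \<noteq> 0" using h take2[of i x] assms by (simp add: numeral_2_eq_2)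
  next
    fix i assume h: "Suc i < n \<and> x!i = H \<and> x!Suc i = H \<and> height x i \<noteq> 0"
    thus "i + 2 \<le> length x \<and> take 2 (drop i x) = [H,H] \<and> height x i \<noteq> 0"
      using take2[of i x] assms by (simp add: numeral_2_eq_2)
  qed
  moreover have "{i. 0<i \<and> i<n \<and> x!(i-1) = H \<and> x!i = H \<and> height x (i-1) \<noteq> 0}
     = Suc ` {j. Suc j < n \<and> x!j = H \<and> x!Suc j = H \<and> height x j \<noteq> 0}"
  proof
    show "{i. 0<i \<and> i<n \<and> x!(i-1) = H \<and> x!i = H \<and> height x (i-1) \<noteq> 0}
     \<subseteq> Suc ` {j. Suc j < n \<and> x!j = H \<and> x!Suc j = H \<and> height x j \<noteq> 0}"
    proof
      fix i assume "i \<in> {i. 0<i \<and> i<n \<and> x!(i-1) = H \<and> x!i = H \<and> height x (i-1) \<noteq> 0}"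
      hence "i = Suc (i-1)" "i - 1 \<in> {j. Suc j < n \<and> x!j = H \<and> x!Suc j = H \<and> height x j \<noteq> 0}" by auto
      thus "i \<in> Suc ` {j. Suc j < n \<and> x!j = H \<and> x!Suc j = H \<and> height x j \<noteq> 0}" by (rule image_eqI)
    qed
  qed auto
  ultimately show ?thesis unfolding occ_HH_star_def by (simp add: card_image)
qed

lemma card4:
  assumes "finite A" "finite B" "finite C" "finite E"
    "A \<inter> B = {}" "A \<inter> C = {}" "A \<inter> E = {}" "B \<inter> C = {}" "B \<inter> E = {}" "C \<inter> E = {}"
  shows "card (A \<union> B \<union> C \<union> E) = card A + card B + card C + card E"
  using assms by (simp add: card_Un_disjoint Int_Un_distrib2)

lemma finA: "finite (Aset x n a b)" by (rule finite_subset[of _ "{..<n}"]) (auto simp: Aset_def)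

lemma up_count:
  assumes x: "x \<in> SS b n"
  shows "card (up_covers (SS b n) x) = occ [H,U] x + occ [D,H] x + occ [D,U] x + occ [H,H] x"
proof -
  have lx: "length x = n" using x by (simp add: SS_def)
  have "Iu x n = Aset x n H U \<union> Aset x n D H \<union> Aset x n D U \<union> Aset x n H H"
  proof (intro set_eqI iffI)
    fix i assume "i \<in> Iu x n"
    hence i: "0<i" "i<n" and c: "height x i \<le> height x (i-1)" "height x i \<le> height x (Suc i)"
      by (auto simp: Iu_def)
    have e1: "height x i = height x (i-1) + stepval (x!(i-1))" using height_pred[of i x] i lx by simp
    have e2: "height x (Suc i) = height x i + stepval (x!i)" using height_Suc[of i x] i lx by simp
    show "i \<in> Aset x n H U \<union> Aset x n D H \<union> Aset x n D U \<union> Aset x n H H"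
      using i c e1 e2 by (cases "x!(i-1)"; cases "x!i") (auto simp: Aset_def)
  next
    fix i assume a: "i \<in> Aset x n H U \<union> Aset x n D H \<union> Aset x n D U \<union> Aset x n H H"
    hence i: "0<i" "i<n" by (auto simp: Aset_def)
    have e1: "height x i = height x (i-1) + stepval (x!(i-1))" using height_pred[of i x] i lx by simp
    have e2: "height x (Suc i) = height x i + stepval (x!i)" using height_Suc[of i x] i lx by simp
    show "i \<in> Iu x n" using a i e1 e2 by (auto simp: Aset_def Iu_def)
  qed
  moreover have "card (Aset x n H U \<union> Aset x n D H \<union> Aset x n D U \<union> Aset x n H H)
    = card (Aset x n H U) + card (Aset x n D H) + card (Aset x n D U) + card (Aset x n H H)"
    by (rule card4) (auto simp: finA Aset_def)
  ultimately show ?thesis using card_up[OF x] occ_eq[OF lx] by simp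
qed

lemma down_count_G:
  assumes x: "x \<in> SS False n"
  shows "card (down_covers (SS False n) x) = occ [U,H] x + occ [H,D] x + occ [U,D] x + occ [H,H] x"
proof -
  have lx: "length x = n" using x by (simp add: SS_def)
  have "Id False x n = Aset x n U H \<union> Aset x n H D \<union> Aset x n U D \<union> Aset x n H H"
  proof (intro set_eqI iffI)
    fix i assume "i \<in> Id False x n"
    hence i: "0<i" "i<n" and c: "height x (i-1) \<le> height x i" "height x (Suc i) \<le> height x i"
      by (auto simp: Id_def)
    have e1: "height x i = height x (i-1) + stepval (x!(i-1))" using height_pred[of i x] i lx by simp
    have e2: "height x (Suc i) = height x i + stepval (x!i)" using height_Suc[of i x] i lx by simp
    show "i \<in> Aset x n U H \<union> Aset x n H D \<union> Aset x n U D \<union> Aset x n H H"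
      using i c e1 e2 by (cases "x!(i-1)"; cases "x!i") (auto simp: Aset_def)
  next
    fix i assume a: "i \<in> Aset x n U H \<union> Aset x n H D \<union> Aset x n U D \<union> Aset x n H H"
    hence i: "0<i" "i<n" by (auto simp: Aset_def)
    have e1: "height x i = height x (i-1) + stepval (x!(i-1))" using height_pred[of i x] i lx by simp
    have e2: "height x (Suc i) = height x i + stepval (x!i)" using height_Suc[of i x] i lx by simp
    show "i \<in> Id False x n" using a i e1 e2 by (auto simp: Aset_def Id_def)
  qed
  moreover have "card (Aset x n U H \<union> Aset x n H D \<union> Aset x n U D \<union> Aset x n H H)
    = card (Aset x n U H) + card (Aset x n H D) + card (Aset x n U D) + card (Aset x n H H)"
    by (rule card4) (auto simp: finA Aset_def)
  ultimately show ?thesis using card_down[OF x] occ_eq[OF lx] by simp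
qed

lemma down_count_M:
  assumes x: "x \<in> SS True n"
  shows "card (down_covers (SS True n) x) = occ [U,H] x + occ [H,D] x + occ [U,D] x + occ_HH_star x"
proof -
  have lx: "length x = n" and nn: "\<forall>j\<le>n. 0 \<le> height x j" using x by (auto simp: SS_def)
  define B where "B = {i. 0<i \<and> i<n \<and> x!(i-1) = H \<and> x!i = H \<and> height x (i-1) \<noteq> 0}"
  have "Id True x n = Aset x n U H \<union> Aset x n H D \<union> Aset x n U D \<union> B"
  proof (intro set_eqI iffI)
    fix i assume "i \<in> Id True x n"
    hence i: "0<i" "i<n" and c: "height x (i-1) \<le> height x i" "height x (Suc i) \<le> height x i"
      "1 \<le> height x i"
      by (auto simp: Id_def)
    have e1: "height x i = height x (i-1) + stepval (x!(i-1))" using height_pred[of i x] i lx by simp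
    have e2: "height x (Suc i) = height x i + stepval (x!i)" using height_Suc[of i x] i lx by simp
    show "i \<in> Aset x n U H \<union> Aset x n H D \<union> Aset x n U D \<union> B"
      using i c e1 e2 by (cases "x!(i-1)"; cases "x!i") (auto simp: Aset_def B_def)
  next
    fix i assume a: "i \<in> Aset x n U H \<union> Aset x n H D \<union> Aset x n U D \<union> B"
    hence i: "0<i" "i<n" by (auto simp: Aset_def B_def)
    have e1: "height x i = height x (i-1) + stepval (x!(i-1))" using height_pred[of i x] i lx by simp
    have e2: "height x (Suc i) = height x i + stepval (x!i)" using height_Suc[of i x] i lx by simp
    have n1: "0 \<le> height x (i-1)" "0 \<le> height x (Suc i)" using nn i by auto
    show "i \<in> Id True x n" using a i e1 e2 n1 by (auto simp: Aset_def Id_def B_def)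
  qed
  moreover have "card (Aset x n U H \<union> Aset x n H D \<union> Aset x n U D \<union> B)
    = card (Aset x n U H) + card (Aset x n H D) + card (Aset x n U D) + card B"
    by (rule card4) (auto simp: finA Aset_def B_def)
  ultimately show ?thesis using card_down[OF x] occ_eq[OF lx] occ_star_eq[OF lx] B_def by simp
qed

theorem mainTheorem6:
  fixes n :: nat
  shows "(\<forall>\<gamma>\<in>motzkin n.
            card (up_covers (motzkin n) \<gamma>) =
              occ [H,U] \<gamma> + occ [D,H] \<gamma> + occ [D,U] \<gamma> + occ [H,H] \<gamma> \<and>
            card (down_covers (motzkin n) \<gamma>) =
              occ [U,H] \<gamma> + occ [H,D] \<gamma> + occ [U,D] \<gamma> + occ_HH_star \<gamma>) \<and>
         (\<forall>\<gamma>\<in>grand_motzkin n.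
            card (up_covers (grand_motzkin n) \<gamma>) =
              occ [H,U] \<gamma> + occ [D,H] \<gamma> + occ [D,U] \<gamma> + occ [H,H] \<gamma> \<and>
            card (down_covers (grand_motzkin n) \<gamma>) =
              occ [U,H] \<gamma> + occ [H,D] \<gamma> + occ [U,D] \<gamma> + occ [H,H] \<gamma>)"
  unfolding motzkin_SS grand_SS
  using up_count down_count_G down_count_M by blast

end
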